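(* Let $I=(z_1^3-z_3z_2,\,z_2^2)\subset\mathcal{O}_3$. Then $\mathbf{T}_2(I)=3$ and $\beta_2(I)=4$. More precisely, for $a,b\in\mathbb{C}$ one has $\mathbf{T}_1(I,az_1+bz_2+z_3)=4$ if $a\neq 0$ and $=3$ if $a=0$, while $\mathbf{T}_1(I,az_1+bz_2)=\infty$.
   Context: $\mathcal{O}_n$ denotes the local ring of germs at $0\in\mathbb{C}^n$ of holomorphic functions. $\Gamma$ denotes the set of non-constant germs of holomorphic maps $z\colon(\mathbb{C},0)\to(\mathbb{C}^n,0)$; $v(z)$ is the order of vanishing of $z$ at $0$ and $v(g\circ z)$ the order of vanishing of the one-variable germ $g\circ z$ ($v(0)=\infty$). For an ideal $I\subset\mathcal{O}_n$, $\mathbf{T}_1(I)=\sup_{z\in\Gamma}\inf_{g\in I}\frac{v(g\circ z)}{v(z)}$, and for $q\in\{1,\dots,n\}$, $\mathbf{T}_q(I)=\inf_{\{w_1,\dots,w_{q-1}\}}\mathbf{T}_1(I,w_1,\dots,w_{q-1})$ over all linear functions $w_1,\dots,w_{q-1}$, where $(I,w_1,\dots,w_{q-1})$ is the ideal generated by $I$ and the $w_j$. The generic value $\beta_q(I)$ is the unique $\beta\in\mathbb{R}\cup\{\infty\}$ such that there is a non-empty Zariski open subset $W$ of the Grassmannian $G^{n-q+1}$ of $(n-q+1)$-dimensional linear subspaces of $\mathbb{C}^n$ with $\mathbf{T}_1(I,w_1,\dots,w_{q-1})=\beta$ whenever $\{w_1=\dots=w_{q-1}=0\}\in W$. *)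

theory Defs
  imports "HOL-Analysis.Analysis" "HOL-Library.Numeral_Type"
begin

definition cholo_on :: "(complex^'n) set \<Rightarrow> (complex^'n \<Rightarrow> complex) \<Rightarrow> bool" where
  "cholo_on U f \<longleftrightarrow>
     (\<forall>x\<in>U. \<exists>L. (f has_derivative L) (at x) \<and> (\<forall>c v. L (c *s v) = c * L v))"

text \<open>A function representing an element of O_n (holomorphic near 0).\<close>
definition germ_holo :: "(complex^'n \<Rightarrow> complex) \<Rightarrow> bool" where
  "germ_holo f \<longleftrightarrow> (\<exists>U. open U \<and> 0 \<in> U \<and> cholo_on U f)"

text \<open>Ideal of O_n generated by S (germs: closed under agreement near 0).\<close>
definition gen_ideal :: "(complex^'n \<Rightarrow> complex) set \<Rightarrow> (complex^'n \<Rightarrow> complex) set" where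
  "gen_ideal S = {g. germ_holo g \<and>
     (\<exists>F h. finite F \<and> F \<subseteq> S \<and> (\<forall>f\<in>F. germ_holo (h f)) \<and>
        (\<forall>\<^sub>F x in nhds 0. g x = (\<Sum>f\<in>F. h f x * f x)))}"

definition ord0 :: "(complex \<Rightarrow> complex) \<Rightarrow> enat" where
  "ord0 f = (if \<exists>k. (deriv ^^ k) f 0 \<noteq> 0
             then enat (LEAST k. (deriv ^^ k) f 0 \<noteq> 0) else \<infinity>)"

definition curves :: "(complex \<Rightarrow> complex^'n) set" where
  "curves = {z. (\<exists>U. open U \<and> 0 \<in> U \<and> (\<forall>i. (\<lambda>t. z t $ i) holomorphic_on U))
               \<and> z 0 = 0 \<and> \<not> (\<forall>\<^sub>F t in nhds 0. z t = 0)}"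

definition curve_ord :: "(complex \<Rightarrow> complex^'n) \<Rightarrow> enat" where
  "curve_ord z = (INF i. ord0 (\<lambda>t. z t $ i))"

definition T1 :: "(complex^'n \<Rightarrow> complex) set \<Rightarrow> ereal" where
  "T1 I = (SUP z\<in>curves. INF g\<in>I.
             ereal_of_enat (ord0 (g \<circ> z)) / ereal_of_enat (curve_ord z))"

definition linform :: "complex^'n \<Rightarrow> complex^'n \<Rightarrow> complex" where
  "linform c = (\<lambda>x. \<Sum>i\<in>UNIV. c $ i * x $ i)"

definition Tq :: "nat \<Rightarrow> (complex^'n \<Rightarrow> complex) set \<Rightarrow> ereal" where
  "Tq q I = (INF ws\<in>{ws :: (complex^'n) list. length ws = q - 1}.
               T1 (gen_ideal (I \<union> linform ` set ws)))"

definition hom_poly :: "(complex^'n \<Rightarrow> complex) \<Rightarrow> bool" where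
  "hom_poly p \<longleftrightarrow> (\<exists>(d::nat) (F::('n \<Rightarrow> nat) set) c. finite F \<and>
      (\<forall>\<alpha>\<in>F. (\<Sum>i\<in>UNIV. \<alpha> i) = d) \<and>
      p = (\<lambda>x. \<Sum>\<alpha>\<in>F. c \<alpha> * (\<Prod>i\<in>UNIV. x $ i ^ \<alpha> i)))"

text \<open>Zariski open subsets of G^{n-1} (hyperplanes), identified with the dual
  projective space: represented by the cone of nonzero coefficient vectors c
  of the hyperplanes {linform c = 0} lying in the open set.\<close>
definition zariski_open_hyp :: "(complex^'n) set \<Rightarrow> bool" where
  "zariski_open_hyp W \<longleftrightarrow>
     (\<exists>P. (\<forall>p\<in>P. hom_poly p) \<and> W = {c. c \<noteq> 0 \<and> (\<exists>p\<in>P. p c \<noteq> 0)})"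

text \<open>Generic value beta_2 (q = 2: subspaces of dimension n-1).\<close>
definition beta2 :: "(complex^'n \<Rightarrow> complex) set \<Rightarrow> ereal" where
  "beta2 I = (THE \<beta>. \<exists>W. zariski_open_hyp W \<and> W \<noteq> {} \<and>
                 (\<forall>c\<in>W. T1 (gen_ideal (I \<union> {linform c})) = \<beta>))"

end

theory Submission
  imports Defs "HOL-Complex_Analysis.Complex_Singularities"
begin


definition hol0 :: "(complex \<Rightarrow> complex) \<Rightarrow> bool" where
  "hol0 f \<longleftrightarrow> (\<exists>U. open U \<and> 0 \<in> U \<and> f holomorphic_on U)"

lemma hol0_add: "hol0 f \<Longrightarrow> hol0 g \<Longrightarrow> hol0 (\<lambda>t. f t + g t)"
  unfolding hol0_def
proof (elim exE conjE)
  fix U V assume "open U" "0 \<in> U" "f holomorphic_on U" "open V" "0 \<in> V" "g holomorphic_on V"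
  then show "\<exists>W. open W \<and> 0 \<in> W \<and> (\<lambda>t. f t + g t) holomorphic_on W"
    by (intro exI[of _ "U \<inter> V"]) (auto intro!: holomorphic_intros intro: holomorphic_on_subset)
qed

lemma hol0_mult: "hol0 f \<Longrightarrow> hol0 g \<Longrightarrow> hol0 (\<lambda>t. f t * g t)"
  unfolding hol0_def
proof (elim exE conjE)
  fix U V assume "open U" "0 \<in> U" "f holomorphic_on U" "open V" "0 \<in> V" "g holomorphic_on V"
  then show "\<exists>W. open W \<and> 0 \<in> W \<and> (\<lambda>t. f t * g t) holomorphic_on W"
    by (intro exI[of _ "U \<inter> V"]) (auto intro!: holomorphic_intros intro: holomorphic_on_subset)
qed

lemma hol0_const[simp]: "hol0 (\<lambda>t. c)"
  unfolding hol0_def by (rule exI[of _ UNIV]) auto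

lemma hol0_id[simp]: "hol0 (\<lambda>t. t)"
  unfolding hol0_def by (rule exI[of _ UNIV]) auto

lemma hol0_pow: "hol0 f \<Longrightarrow> hol0 (\<lambda>t. f t ^ n)"
  by (induction n) (auto intro: hol0_mult)

lemma hol0_diff: "hol0 f \<Longrightarrow> hol0 g \<Longrightarrow> hol0 (\<lambda>t. f t - g t)"
  using hol0_add[of f "\<lambda>t. (-1) * g t"] hol0_mult[of "\<lambda>t. -1" g] by simp

lemma hol0_sum: "finite F \<Longrightarrow> (\<And>i. i \<in> F \<Longrightarrow> hol0 (f i)) \<Longrightarrow> hol0 (\<lambda>t. \<Sum>i\<in>F. f i t)"
  by (induction F rule: finite_induct) (auto intro: hol0_add)

lemma ord0_cong: "eventually (\<lambda>t. f t = g t) (nhds 0) \<Longrightarrow> ord0 f = ord0 g"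
proof -
  assume "eventually (\<lambda>t. f t = g t) (nhds 0)"
  then have "\<And>k. (deriv ^^ k) f 0 = (deriv ^^ k) g 0" by (intro higher_deriv_cong_ev) auto
  then show ?thesis unfolding ord0_def by simp
qed

lemma ord0_zero: "eventually (\<lambda>t. f t = 0) (nhds 0) \<Longrightarrow> ord0 f = \<infinity>"
proof -
  assume "eventually (\<lambda>t. f t = 0) (nhds 0)"
  then have "ord0 f = ord0 (\<lambda>t. 0)" by (rule ord0_cong)
  also have "\<dots> = \<infinity>" unfolding ord0_def by simp
  finally show ?thesis .
qed

lemma ord0_factor:
  assumes "hol0 h" "h 0 \<noteq> 0"
  shows "ord0 (\<lambda>t. t^n * h t) = enat n"
proof -
  obtain U where U: "open U" "0 \<in> U" "h holomorphic_on U" using assms(1) unfolding hol0_def by blast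
  have hp: "(\<lambda>w. w^n) holomorphic_on U" by (auto intro!: holomorphic_intros)
  have P: "(deriv ^^ i) (\<lambda>w::complex. w ^ n) 0 = (if i = n then fact n else 0)" for i
  proof -
    have E: "(deriv ^^ i) (\<lambda>w::complex. w ^ n) 0 = pochhammer (of_nat (Suc n - i)) i * (0-0) ^ (n - i)"
      using higher_deriv_power[of i 0 n 0] by simp
    moreover have F: "pochhammer (of_nat (Suc n - i)) i * (0-0) ^ (n - i) = (if i = n then fact n else (0::complex))"
    proof (cases "i < n")
      case True then show ?thesis by simp
    next
      case False
      show ?thesis
      proof (cases "i = n")
        case True then show ?thesis by (simp add: pochhammer_fact)
      next
        case False2: False
        then have "Suc n - i = 0" using False by simp
        then show ?thesis using False2 False by (simp add: pochhammer_0_left)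
      qed
    qed
    ultimately show ?thesis by (rule trans)
  qed
  have D: "(deriv ^^ k) (\<lambda>t. t^n * h t) 0 = (\<Sum>i = 0..k. of_nat (k choose i) * (deriv ^^ i) (\<lambda>w. w^n) 0 * (deriv ^^ (k-i)) h 0)" for k
    by (rule higher_deriv_mult[OF hp U(3) U(1) U(2)])
  have Z: "(deriv ^^ k) (\<lambda>t. t^n * h t) 0 = 0" if "k < n" for k
    unfolding D P using that by (intro sum.neutral) auto
  have N: "(deriv ^^ n) (\<lambda>t. t^n * h t) 0 \<noteq> 0"
  proof -
    have "(deriv ^^ n) (\<lambda>t. t^n * h t) 0 = (\<Sum>i = 0..n. if i = n then fact n * h 0 else 0)"
      unfolding D P by (intro sum.cong) auto
    also have "\<dots> = fact n * h 0" by simp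
    finally show ?thesis using assms(2) by simp
  qed
  have L: "(LEAST k. (deriv ^^ k) (\<lambda>t. t^n * h t) 0 \<noteq> 0) = n"
    by (rule Least_equality) (use N Z not_less in auto)
  show ?thesis unfolding ord0_def using N L by auto
qed

lemma hol0_factor:
  assumes "hol0 f" "\<not> eventually (\<lambda>t. f t = 0) (nhds 0)"
  shows "\<exists>n h. hol0 h \<and> h 0 \<noteq> 0 \<and> eventually (\<lambda>t. f t = t^n * h t) (nhds 0)"
proof (cases "f 0 = 0")
  case False
  then show ?thesis using assms(1) by (intro exI[of _ 0] exI[of _ f]) auto
next
  case True
  obtain U where U: "open U" "0 \<in> U" "f holomorphic_on U" using assms(1) unfolding hol0_def by blast
  obtain r where r: "r > 0" "ball 0 r \<subseteq> U" using U openE by blast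
  have hb: "f holomorphic_on ball 0 r" using U(3) r(2) holomorphic_on_subset by blast
  have nc: "\<not> f constant_on ball 0 r"
  proof
    assume "f constant_on ball 0 r"
    then obtain c where c: "\<And>x. x \<in> ball 0 r \<Longrightarrow> f x = c" unfolding constant_on_def by blast
    have "f 0 = c" using c r(1) by simp
    then have "c = 0" using True by simp
    then have "eventually (\<lambda>t. f t = 0) (nhds 0)"
      using c r(1) unfolding eventually_nhds by (intro exI[of _ "ball 0 r"]) auto
    then show False using assms(2) by simp
  qed
  have "\<exists>g r' n. 0 < r' \<and> g holomorphic_on ball 0 r' \<and> (\<forall>w\<in>ball 0 r'. f w = w^n * g w \<and> g w \<noteq> 0)"
  proof (rule holomorphic_factor_zero_nonconstant[OF hb open_ball connected_ball _ True nc])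
    fix g r' n assume *: "0 < (n::nat)" "0 < r'" "ball 0 r' \<subseteq> ball 0 r" "g holomorphic_on ball 0 r'"
      "\<And>w. w \<in> ball 0 r' \<Longrightarrow> f w = (w - 0)^n * g w" "\<And>w. w \<in> ball 0 r' \<Longrightarrow> g w \<noteq> 0"
    show "\<exists>g r' n. 0 < r' \<and> g holomorphic_on ball 0 r' \<and> (\<forall>w\<in>ball 0 r'. f w = w^n * g w \<and> g w \<noteq> 0)"
      using * by (intro exI[of _ g] exI[of _ r'] exI[of _ n]) auto
  qed (use r(1) in auto)
  then obtain g r' n where g: "0 < r'" "g holomorphic_on ball 0 r'"
    "\<And>w. w \<in> ball 0 r' \<Longrightarrow> f w = w^n * g w" "\<And>w. w \<in> ball 0 r' \<Longrightarrow> g w \<noteq> 0"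
    by blast
  show ?thesis
  proof (intro exI conjI)
    show "hol0 g" unfolding hol0_def using g by (intro exI[of _ "ball 0 r'"]) auto
    show "g 0 \<noteq> 0" using g by auto
    show "eventually (\<lambda>t. f t = t^n * g t) (nhds 0)"
      unfolding eventually_nhds using g by (intro exI[of _ "ball 0 r'"]) auto
  qed
qed

lemma ord0_cases:
  assumes "hol0 f"
  obtains "eventually (\<lambda>t. f t = 0) (nhds 0)" "ord0 f = \<infinity>"
  | n h where "hol0 h" "h 0 \<noteq> 0" "eventually (\<lambda>t. f t = t^n * h t) (nhds 0)" "ord0 f = enat n"
proof (cases "eventually (\<lambda>t. f t = 0) (nhds 0)")
  case True show ?thesis by (rule that(1)[OF True ord0_zero[OF True]])
next
  case False
  then obtain n h where h: "hol0 h" "h 0 \<noteq> 0" "eventually (\<lambda>t. f t = t^n * h t) (nhds 0)"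
    using hol0_factor[OF assms] by blast
  then have "ord0 f = enat n" using ord0_cong[OF h(3)] ord0_factor[OF h(1,2)] by simp
  then show ?thesis using that h by blast
qed

lemma ord0_ge:
  assumes "hol0 S" "eventually (\<lambda>t. f t = t^n * S t) (nhds 0)"
  shows "enat n \<le> ord0 f"
proof (cases rule: ord0_cases[OF assms(1)])
  case 1
  have "eventually (\<lambda>t. f t = 0) (nhds 0)" using 1(1) assms(2) by eventually_elim auto
  then show ?thesis using ord0_zero by simp
next
  case (2 q h)
  have "eventually (\<lambda>t. f t = t^(n+q) * h t) (nhds 0)" using 2(3) assms(2)
    by eventually_elim (simp add: power_add)
  then have "ord0 f = enat (n+q)" using ord0_cong ord0_factor[OF 2(1,2)] by metis
  then show ?thesis by simp
qed

lemma ord0_mult: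
  assumes "hol0 f" "hol0 g"
  shows "ord0 (\<lambda>t. f t * g t) = ord0 f + ord0 g"
proof (cases rule: ord0_cases[OF assms(1)])
  case 1
  have "eventually (\<lambda>t. f t * g t = 0) (nhds 0)" using 1(1) by eventually_elim auto
  then show ?thesis using ord0_zero 1 by simp
next
  case (2 n h)
  show ?thesis
  proof (cases rule: ord0_cases[OF assms(2)])
    case 1
    have "eventually (\<lambda>t. f t * g t = 0) (nhds 0)" using 1(1) by eventually_elim auto
    then show ?thesis using ord0_zero 1 by simp
  next
    case (2 m k)
    have "eventually (\<lambda>t. f t * g t = t^(n+m) * (h t * k t)) (nhds 0)"
      using \<open>eventually (\<lambda>t. f t = t^n * h t) (nhds 0)\<close> 2(3)
      by eventually_elim (simp add: power_add algebra_simps)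
    moreover have "hol0 (\<lambda>t. h t * k t)" using hol0_mult \<open>hol0 h\<close> 2(1) by blast
    moreover have "h 0 * k 0 \<noteq> 0" using \<open>h 0 \<noteq> 0\<close> 2(2) by simp
    ultimately have "ord0 (\<lambda>t. f t * g t) = enat (n+m)" using ord0_cong ord0_factor by metis
    then show ?thesis using 2 \<open>ord0 f = enat n\<close> by simp
  qed
qed

lemma ord0_add_ge:
  assumes "hol0 f" "hol0 g"
  shows "min (ord0 f) (ord0 g) \<le> ord0 (\<lambda>t. f t + g t)"
proof (cases rule: ord0_cases[OF assms(1)])
  case 1
  have "eventually (\<lambda>t. f t + g t = g t) (nhds 0)" using 1(1) by eventually_elim auto
  then show ?thesis using ord0_cong[of "\<lambda>t. f t + g t" g] by simp
next
  case (2 n h)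
  show ?thesis
  proof (cases rule: ord0_cases[OF assms(2)])
    case 1
    have "eventually (\<lambda>t. f t + g t = f t) (nhds 0)" using 1(1) by eventually_elim auto
    then show ?thesis using ord0_cong[of "\<lambda>t. f t + g t" f] by simp
  next
    case (2 m k)
    let ?p = "min n m"
    have "eventually (\<lambda>t. f t + g t = t^?p * (t^(n - ?p) * h t + t^(m - ?p) * k t)) (nhds 0)"
      using \<open>eventually (\<lambda>t. f t = t^n * h t) (nhds 0)\<close> 2(3)
    proof eventually_elim
      case (elim t)
      have "t^n = t^?p * t^(n-?p)" "t^m = t^?p * t^(m-?p)" by (simp_all flip: power_add)
      then show ?case using elim by (simp add: algebra_simps)
    qed
    moreover have "hol0 (\<lambda>t. t^(n - ?p) * h t + t^(m - ?p) * k t)"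
      using \<open>hol0 h\<close> 2(1) by (intro hol0_add hol0_mult hol0_pow) auto
    ultimately have "enat ?p \<le> ord0 (\<lambda>t. f t + g t)" by (intro ord0_ge[where S="\<lambda>t. t^(n - ?p) * h t + t^(m - ?p) * k t"])
    then show ?thesis using 2 \<open>ord0 f = enat n\<close> by simp
  qed
qed

lemma ord0_add_less:
  assumes "hol0 f" "hol0 g" "ord0 f < ord0 g"
  shows "ord0 (\<lambda>t. f t + g t) = ord0 f"
proof (cases rule: ord0_cases[OF assms(1)])
  case 1
  then show ?thesis using assms(3) by simp
next
  case (2 n h)
  show ?thesis
  proof (cases rule: ord0_cases[OF assms(2)])
    case 1
    have "eventually (\<lambda>t. f t + g t = f t) (nhds 0)" using 1(1) by eventually_elim auto
    then show ?thesis using ord0_cong[of "\<lambda>t. f t + g t" f] by simp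
  next
    case (2 m k)
    have nm: "n < m" using assms(3) 2(4) \<open>ord0 f = enat n\<close> by simp
    have "eventually (\<lambda>t. f t + g t = t^n * (h t + t^(m - n) * k t)) (nhds 0)"
      using \<open>eventually (\<lambda>t. f t = t^n * h t) (nhds 0)\<close> 2(3)
    proof eventually_elim
      case (elim t)
      have "t^m = t^n * t^(m-n)" using nm by (simp flip: power_add)
      then show ?case using elim by (simp add: algebra_simps)
    qed
    moreover have "hol0 (\<lambda>t. h t + t^(m - n) * k t)"
      using \<open>hol0 h\<close> 2(1) by (intro hol0_add hol0_mult hol0_pow) auto
    moreover have "h 0 + 0^(m - n) * k 0 \<noteq> 0" using nm \<open>h 0 \<noteq> 0\<close> by (simp add: zero_power)
    ultimately have "ord0 (\<lambda>t. f t + g t) = enat n" using ord0_cong ord0_factor by metis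
    then show ?thesis using \<open>ord0 f = enat n\<close> by simp
  qed
qed

lemma ord0_const: "c \<noteq> 0 \<Longrightarrow> ord0 (\<lambda>t. c) = 0"
  using ord0_factor[of "\<lambda>t. c" 0] by (simp add: zero_enat_def)

lemma ord0_cmult: "hol0 f \<Longrightarrow> c \<noteq> 0 \<Longrightarrow> ord0 (\<lambda>t. c * f t) = ord0 f"
  using ord0_mult[of "\<lambda>t. c" f] ord0_const by simp




lemma has_derivative_vec_lambda_at:
  fixes f :: "'i::finite \<Rightarrow> complex \<Rightarrow> complex"
  assumes "\<And>i. (f i has_derivative f' i) (at x)"
  shows "((\<lambda>y. \<chi> i. f i y) has_derivative (\<lambda>h. \<chi> i. f' i h)) (at x)"
proof -
  have bl: "bounded_linear (f' i)" for i using assms has_derivative_bounded_linear by blast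
  have lim: "((\<lambda>y. (1 / norm(y - x)) *\<^sub>R (f i y - (f i x + f' i (y - x)))) \<longlongrightarrow> 0) (at x)" for i
    using assms[of i] unfolding has_derivative_within by blast
  have "bounded_linear (\<lambda>h. \<chi> i. f' i h)"
  proof
    show "(\<chi> i. f' i (a + b)) = (\<chi> i. f' i a) + (\<chi> i. f' i b)" for a b
      using bl by (simp add: vec_eq_iff linear_simps)
    show "(\<chi> i. f' i (r *\<^sub>R a)) = r *\<^sub>R (\<chi> i. f' i a)" for r a
      using bl by (simp add: vec_eq_iff linear_simps)
    have "\<forall>i. \<exists>K. \<forall>h. norm (f' i h) \<le> norm h * K" using bl bounded_linear.bounded by blast
    then obtain K where K: "\<And>i h. norm (f' i h) \<le> norm h * K i" by metis
    show "\<exists>K. \<forall>h. norm (\<chi> i. f' i h) \<le> norm h * K"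
    proof (intro exI allI)
      fix h
      have "norm (\<chi> i. f' i h) \<le> (\<Sum>i\<in>UNIV. norm ((\<chi> i. f' i h) $ i))" by (simp add: norm_vec_def L2_set_le_sum)
      also have "\<dots> \<le> (\<Sum>i\<in>UNIV. norm h * K i)" using K by (intro sum_mono) simp
      also have "\<dots> = norm h * (\<Sum>i\<in>UNIV. K i)" by (simp add: sum_distrib_left)
      finally show "norm (\<chi> i. f' i h) \<le> norm h * (\<Sum>i\<in>UNIV. K i)" .
    qed
  qed
  moreover have "((\<lambda>y. (1 / norm(y - x)) *\<^sub>R ((\<chi> i. f i y) - ((\<chi> i. f i x) + (\<chi> i. f' i (y - x))))) \<longlongrightarrow> 0) (at x)"
  proof -
    have "((\<lambda>y. \<chi> i. (1 / norm(y - x)) *\<^sub>R (f i y - (f i x + f' i (y - x)))) \<longlongrightarrow> (\<chi> i. 0)) (at x)"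
      by (rule tendsto_vec_lambda) (rule lim)
    moreover have "(\<lambda>y. \<chi> i. (1 / norm(y - x)) *\<^sub>R (f i y - (f i x + f' i (y - x)))) =
        (\<lambda>y. (1 / norm(y - x)) *\<^sub>R ((\<chi> i. f i y) - ((\<chi> i. f i x) + (\<chi> i. f' i (y - x)))))"
      by (rule ext) (simp add: vec_eq_iff)
    ultimately show ?thesis unfolding zero_vec_def by simp
  qed
  ultimately show ?thesis unfolding has_derivative_within by blast
qed

definition cdiff_at :: "(complex^'n \<Rightarrow> complex) \<Rightarrow> complex^'n \<Rightarrow> bool" where
  "cdiff_at f x \<longleftrightarrow> (\<exists>L. (f has_derivative L) (at x) \<and> (\<forall>c v. L (c *s v) = c * L v))"

lemma cdiff_const[simp]: "cdiff_at (\<lambda>x. c) x"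
  unfolding cdiff_at_def by (intro exI[of _ "\<lambda>_. 0"]) auto

lemma cdiff_nth[simp]: "cdiff_at (\<lambda>x. x $ i) x"
  unfolding cdiff_at_def
  by (intro exI[of _ "\<lambda>v. v $ i"]) (auto intro: bounded_linear_imp_has_derivative)

lemma cdiff_add: "cdiff_at f x \<Longrightarrow> cdiff_at g x \<Longrightarrow> cdiff_at (\<lambda>x. f x + g x) x"
  unfolding cdiff_at_def
proof (elim exE conjE)
  fix L M assume L: "(f has_derivative L) (at x)" "\<forall>c v. L (c *s v) = c * L v"
    and M: "(g has_derivative M) (at x)" "\<forall>c v. M (c *s v) = c * M v"
  show "\<exists>L. ((\<lambda>x. f x + g x) has_derivative L) (at x) \<and> (\<forall>c v. L (c *s v) = c * L v)"
    using has_derivative_add[OF L(1) M(1)] L(2) M(2)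
    by (intro exI[of _ "\<lambda>h. L h + M h"]) (auto simp: algebra_simps)
qed

lemma cdiff_mult: "cdiff_at f x \<Longrightarrow> cdiff_at g x \<Longrightarrow> cdiff_at (\<lambda>x. f x * g x) x"
  unfolding cdiff_at_def
proof (elim exE conjE)
  fix L M assume L: "(f has_derivative L) (at x)" "\<forall>c v. L (c *s v) = c * L v"
    and M: "(g has_derivative M) (at x)" "\<forall>c v. M (c *s v) = c * M v"
  show "\<exists>L. ((\<lambda>x. f x * g x) has_derivative L) (at x) \<and> (\<forall>c v. L (c *s v) = c * L v)"
    using has_derivative_mult[OF L(1) M(1)] L(2) M(2)
    by (intro exI[of _ "\<lambda>h. f x * M h + L h * g x"]) (auto simp: algebra_simps)
qed

lemma cdiff_diff: "cdiff_at f x \<Longrightarrow> cdiff_at g x \<Longrightarrow> cdiff_at (\<lambda>x. f x - g x) x"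
  using cdiff_add[of f x "\<lambda>x. (-1) * g x"] cdiff_mult[of "\<lambda>x. -1" x g] by simp

lemma cdiff_pow: "cdiff_at f x \<Longrightarrow> cdiff_at (\<lambda>x. f x ^ n) x"
  by (induction n) (auto intro: cdiff_mult)

lemma germ_holoI: "(\<And>x. cdiff_at f x) \<Longrightarrow> germ_holo f"
  unfolding germ_holo_def cholo_on_def cdiff_at_def by (intro exI[of _ UNIV]) auto

lemma hol0_compose:
  fixes \<gamma> :: "complex \<Rightarrow> complex^'n"
  assumes "germ_holo h" "open U" "0 \<in> U" "\<And>i. (\<lambda>t. \<gamma> t $ i) holomorphic_on U" "\<gamma> 0 = 0"
  shows "hol0 (\<lambda>t. h (\<gamma> t))"
proof -
  obtain V where V: "open V" "0 \<in> V" "cholo_on V h" using assms(1) unfolding germ_holo_def by blast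
  have dz: "(\<gamma> has_derivative (\<lambda>s. \<chi> i. deriv (\<lambda>t. \<gamma> t $ i) t * s)) (at t)" if "t \<in> U" for t
  proof -
    have "((\<lambda>t. \<gamma> t $ i) has_derivative (\<lambda>s. deriv (\<lambda>t. \<gamma> t $ i) t * s)) (at t)" for i
      using holomorphic_derivI[OF assms(4) assms(2) that, of i UNIV] unfolding has_field_derivative_def
      by simp
    then have "((\<lambda>y. \<chi> i. \<gamma> y $ i) has_derivative (\<lambda>s. \<chi> i. deriv (\<lambda>t. \<gamma> t $ i) t * s)) (at t)"
      by (rule has_derivative_vec_lambda_at[where f="\<lambda>i y. \<gamma> y $ i"])
    then show ?thesis by (simp add: vec_lambda_eta)
  qed
  have cont: "continuous_on U \<gamma>"
    by (intro continuous_at_imp_continuous_on ballI has_derivative_continuous[OF dz])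
  define W where "W = U \<inter> \<gamma> -` V"
  have W: "open W" "0 \<in> W" unfolding W_def
    using continuous_open_preimage[OF cont assms(2) V(1)] assms(3,5) V(2) by (auto simp: Int_def)
  have "(\<lambda>t. h (\<gamma> t)) holomorphic_on W"
    unfolding holomorphic_on_def
  proof
    fix t assume t: "t \<in> W"
    then have tU: "t \<in> U" and tV: "\<gamma> t \<in> V" by (auto simp: W_def)
    obtain L where L: "(h has_derivative L) (at (\<gamma> t))" "\<forall>c v. L (c *s v) = c * L v"
      using V(3) tV unfolding cholo_on_def by blast
    let ?d = "\<chi> i. deriv (\<lambda>t. \<gamma> t $ i) t"
    have "((\<lambda>t. h (\<gamma> t)) has_derivative (\<lambda>s. L (\<chi> i. deriv (\<lambda>t. \<gamma> t $ i) t * s))) (at t)"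
      using diff_chain_at[OF dz[OF tU] L(1)] by (simp add: o_def)
    moreover have "(\<lambda>s. L (\<chi> i. deriv (\<lambda>t. \<gamma> t $ i) t * s)) = (\<lambda>s. L ?d * s)"
    proof
      fix s
      have "(\<chi> i. deriv (\<lambda>t. \<gamma> t $ i) t * s) = s *s ?d" by (simp add: vec_eq_iff)
      then show "L (\<chi> i. deriv (\<lambda>t. \<gamma> t $ i) t * s) = L ?d * s" using L(2) by (simp add: mult.commute)
    qed
    ultimately have "((\<lambda>t. h (\<gamma> t)) has_field_derivative L ?d) (at t)"
      unfolding has_field_derivative_def by simp
    then show "(\<lambda>t. h (\<gamma> t)) field_differentiable at t within W"
      using field_differentiable_at_within field_differentiable_def by blast
  qed
  then show ?thesis unfolding hol0_def using W by blast
qed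




lemma curve_eventually:
  fixes \<gamma> :: "complex \<Rightarrow> complex^'n"
  assumes "open U" "0 \<in> U" "\<And>i. (\<lambda>t. \<gamma> t $ i) holomorphic_on U" "\<gamma> 0 = 0"
    and "eventually P (nhds 0)"
  shows "eventually (\<lambda>t. P (\<gamma> t)) (nhds 0)"
proof -
  have dz: "(\<gamma> has_derivative (\<lambda>s. \<chi> i. deriv (\<lambda>t. \<gamma> t $ i) t * s)) (at t)" if "t \<in> U" for t
  proof -
    have "((\<lambda>t. \<gamma> t $ i) has_derivative (\<lambda>s. deriv (\<lambda>t. \<gamma> t $ i) t * s)) (at t)" for i
      using holomorphic_derivI[OF assms(3) assms(1) that, of i UNIV] unfolding has_field_derivative_def
      by simp
    then have "((\<lambda>y. \<chi> i. \<gamma> y $ i) has_derivative (\<lambda>s. \<chi> i. deriv (\<lambda>t. \<gamma> t $ i) t * s)) (at t)"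
      by (rule has_derivative_vec_lambda_at[where f="\<lambda>i y. \<gamma> y $ i"])
    then show ?thesis by (simp add: vec_lambda_eta)
  qed
  have cont: "continuous_on U \<gamma>"
    by (intro continuous_at_imp_continuous_on ballI has_derivative_continuous[OF dz])
  obtain S where S: "open S" "0 \<in> S" "\<And>x. x \<in> S \<Longrightarrow> P x" using assms(5) unfolding eventually_nhds by blast
  define W where "W = U \<inter> \<gamma> -` S"
  have W: "open W" "0 \<in> W" unfolding W_def
    using continuous_open_preimage[OF cont assms(1) S(1)] assms(2,4) S(2) by (auto simp: Int_def)
  show ?thesis unfolding eventually_nhds using W S(3) by (intro exI[of _ W]) (auto simp: W_def)
qed

lemma ideal_dvdt:
  fixes \<gamma> :: "complex \<Rightarrow> complex^'n"
  assumes U: "open U" "0 \<in> U" "\<And>i. (\<lambda>t. \<gamma> t $ i) holomorphic_on U" "\<gamma> 0 = 0"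
    and S: "\<And>s. s \<in> S \<Longrightarrow> \<exists>Q. hol0 Q \<and> eventually (\<lambda>t. s (\<gamma> t) = t^n * Q t) (nhds 0)"
    and g: "g \<in> gen_ideal S"
  shows "\<exists>Q. hol0 Q \<and> eventually (\<lambda>t. g (\<gamma> t) = t^n * Q t) (nhds 0)"
proof -
  obtain F h where F: "finite F" "F \<subseteq> S" "\<forall>f\<in>F. germ_holo (h f)"
    "eventually (\<lambda>x. g x = (\<Sum>f\<in>F. h f x * f x)) (nhds 0)"
    using g unfolding gen_ideal_def by blast
  have "\<forall>f\<in>F. \<exists>Q. hol0 Q \<and> eventually (\<lambda>t. f (\<gamma> t) = t^n * Q t) (nhds 0)"
    using S F(2) by blast
  then obtain Q where Q: "\<And>f. f \<in> F \<Longrightarrow> hol0 (Q f)"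
    "\<And>f. f \<in> F \<Longrightarrow> eventually (\<lambda>t. f (\<gamma> t) = t^n * Q f t) (nhds 0)"
    by metis
  have e1: "eventually (\<lambda>t. g (\<gamma> t) = (\<Sum>f\<in>F. h f (\<gamma> t) * f (\<gamma> t))) (nhds 0)"
    by (rule curve_eventually[OF U F(4)])
  have e2: "eventually (\<lambda>t. \<forall>f\<in>F. f (\<gamma> t) = t^n * Q f t) (nhds 0)"
    using Q(2) F(1) by (simp add: eventually_ball_finite)
  show ?thesis
  proof (intro exI conjI)
    show "hol0 (\<lambda>t. \<Sum>f\<in>F. h f (\<gamma> t) * Q f t)"
      using F(1) by (intro hol0_sum hol0_mult hol0_compose[OF _ U] Q(1)) (use F(3) in auto)
    show "eventually (\<lambda>t. g (\<gamma> t) = t^n * (\<Sum>f\<in>F. h f (\<gamma> t) * Q f t)) (nhds 0)"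
      using e1 e2
    proof eventually_elim
      case (elim t)
      have "g (\<gamma> t) = (\<Sum>f\<in>F. h f (\<gamma> t) * (t^n * Q f t))"
        using elim(1) by (simp add: elim(2) cong: sum.cong)
      also have "\<dots> = t^n * (\<Sum>f\<in>F. h f (\<gamma> t) * Q f t)"
        by (simp add: sum_distrib_left algebra_simps)
      finally show ?case .
    qed
  qed
qed

lemma T1_lower:
  assumes "\<gamma> \<in> curves" "curve_ord \<gamma> = 1" "\<And>g. g \<in> J \<Longrightarrow> e \<le> ord0 (\<lambda>t. g (\<gamma> t))"
  shows "ereal_of_enat e \<le> T1 J"
proof -
  have c1: "ereal_of_enat (curve_ord \<gamma>) = 1" using assms(2) by (simp add: one_enat_def one_ereal_def)
  have "ereal_of_enat e \<le> (INF g\<in>J. ereal_of_enat (ord0 (g \<circ> \<gamma>)) / ereal_of_enat (curve_ord \<gamma>))"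
    using assms(3) by (intro INF_greatest) (simp add: o_def c1)
  also have "\<dots> \<le> T1 J" unfolding T1_def using assms(1) by (rule SUP_upper)
  finally show ?thesis .
qed

lemma curve_comp_ord:
  assumes "z \<in> curves"
  shows "hol0 (\<lambda>t. z t $ i)" "1 \<le> ord0 (\<lambda>t. z t $ i)"
proof -
  obtain U where U: "open U" "0 \<in> U" "\<And>i. (\<lambda>t. z t $ i) holomorphic_on U" "z 0 = 0"
    using assms unfolding curves_def by blast
  show h: "hol0 (\<lambda>t. z t $ i)" unfolding hol0_def using U by blast
  show "1 \<le> ord0 (\<lambda>t. z t $ i)"
  proof (cases rule: ord0_cases[OF h])
    case 1 then show ?thesis by simp
  next
    case (2 n h)
    have "z 0 $ i = 0^n * h 0" using eventually_nhds_x_imp_x[OF 2(3)] by simp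
    then have "n \<noteq> 0" using U(4) 2(2) by auto
    then show ?thesis using 2(4) by (simp add: one_enat_def)
  qed
qed

lemma curve_ord3:
  fixes z :: "complex \<Rightarrow> complex^3"
  assumes "z \<in> curves"
  shows "\<exists>m. curve_ord z = enat m \<and> 1 \<le> m"
proof -
  have cz: "curve_ord z = min (ord0 (\<lambda>t. z t $ 1)) (min (ord0 (\<lambda>t. z t $ 2)) (ord0 (\<lambda>t. z t $ 3)))"
    unfolding curve_ord_def UNIV_3 by (simp add: inf_min)
  have ne: "\<not> eventually (\<lambda>t. z t = 0) (nhds 0)" using assms unfolding curves_def by blast
  have "\<exists>i. ord0 (\<lambda>t. z t $ i) \<noteq> \<infinity>"
  proof (rule ccontr)
    assume "\<not> ?thesis"
    then have inf: "ord0 (\<lambda>t. z t $ i) = \<infinity>" for i by blast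
    have ev: "eventually (\<lambda>t. z t $ i = 0) (nhds 0)" for i
    proof (cases rule: ord0_cases[OF curve_comp_ord(1)[OF assms, of i]])
      case 1 then show ?thesis by simp
    next
      case (2 n h) then show ?thesis using inf[of i] by simp
    qed
    have "eventually (\<lambda>t. \<forall>i. z t $ i = 0) (nhds 0)" using ev by (simp add: eventually_all_finite)
    then have "eventually (\<lambda>t. z t = 0) (nhds 0)" by eventually_elim (simp add: vec_eq_iff)
    then show False using ne by simp
  qed
  then obtain i where i: "ord0 (\<lambda>t. z t $ i) \<noteq> \<infinity>" by blast
  have "curve_ord z \<le> ord0 (\<lambda>t. z t $ i)" unfolding curve_ord_def by (rule INF_lower) simp
  then have fin: "curve_ord z \<noteq> \<infinity>" using i by (metis enat_ord_simps(5) neq_iff)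
  have ge: "1 \<le> curve_ord z" unfolding cz using curve_comp_ord(2)[OF assms] by simp
  from fin ge show ?thesis by (cases "curve_ord z") (auto simp: one_enat_def)
qed

lemma T1_upper:
  fixes J :: "(complex^3 \<Rightarrow> complex) set"
  assumes "\<And>z. z \<in> curves \<Longrightarrow> \<exists>g\<in>J. ord0 (\<lambda>t. g (z t)) \<le> enat k * curve_ord z"
  shows "T1 J \<le> ereal (real k)"
  unfolding T1_def
proof (rule SUP_least)
  fix z :: "complex \<Rightarrow> complex^3" assume z: "z \<in> curves"
  obtain m where m: "curve_ord z = enat m" "1 \<le> m" using curve_ord3[OF z] by blast
  obtain g where g: "g \<in> J" "ord0 (\<lambda>t. g (z t)) \<le> enat k * curve_ord z" using assms[OF z] by blast
  have "ereal_of_enat (ord0 (g \<circ> z)) / ereal_of_enat (curve_ord z) \<le> ereal (real k)"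
  proof -
    have le: "ereal_of_enat (ord0 (g \<circ> z)) \<le> ereal (real (k * m))"
      using g(2) m(1) by (simp add: o_def ereal_of_enat_le_iff[symmetric] del: ereal_of_enat_le_iff)
    have "ereal_of_enat (curve_ord z) = ereal (real m)" using m(1) by simp
    moreover have "ereal (real (k*m)) = ereal (real m) * ereal (real k)" by simp
    ultimately show ?thesis using le m(2) by (subst ereal_divide_le_pos) (auto simp: mult.commute)
  qed
  then show "(INF g\<in>J. ereal_of_enat (ord0 (g \<circ> z)) / ereal_of_enat (curve_ord z)) \<le> ereal (real k)"
    by (rule INF_lower2[OF g(1)])
qed




lemma germ_holo_add: "germ_holo f \<Longrightarrow> germ_holo g \<Longrightarrow> germ_holo (\<lambda>x. f x + g x)"
  unfolding germ_holo_def
proof (elim exE conjE)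
  fix U V assume "open U" "0 \<in> U" "cholo_on U f" "open V" "0 \<in> V" "cholo_on V g"
  then show "\<exists>W. open W \<and> 0 \<in> W \<and> cholo_on W (\<lambda>x. f x + g x)"
    by (intro exI[of _ "U \<inter> V"]) (auto simp: cholo_on_def intro!: cdiff_add[unfolded cdiff_at_def])
qed

lemma germ_holo_mult: "germ_holo f \<Longrightarrow> germ_holo g \<Longrightarrow> germ_holo (\<lambda>x. f x * g x)"
  unfolding germ_holo_def
proof (elim exE conjE)
  fix U V assume "open U" "0 \<in> U" "cholo_on U f" "open V" "0 \<in> V" "cholo_on V g"
  then show "\<exists>W. open W \<and> 0 \<in> W \<and> cholo_on W (\<lambda>x. f x * g x)"
    by (intro exI[of _ "U \<inter> V"]) (auto simp: cholo_on_def intro!: cdiff_mult[unfolded cdiff_at_def])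
qed

lemma germ_holo_const[simp]: "germ_holo (\<lambda>x. c)"
  by (rule germ_holoI) simp

lemma gen_ideal_holo: "f \<in> gen_ideal S \<Longrightarrow> germ_holo f"
  unfolding gen_ideal_def by blast

lemma gen_ideal_gen: "s \<in> S \<Longrightarrow> germ_holo s \<Longrightarrow> s \<in> gen_ideal S"
  unfolding gen_ideal_def
  by (intro CollectI conjI exI[of _ "{s}"] exI[of _ "\<lambda>_ _. 1"]) auto

lemma gen_ideal_mult:
  assumes "germ_holo a" "f \<in> gen_ideal S"
  shows "(\<lambda>x. a x * f x) \<in> gen_ideal S"
proof -
  obtain F h where F: "finite F" "F \<subseteq> S" "\<forall>f\<in>F. germ_holo (h f)"
    "eventually (\<lambda>x. f x = (\<Sum>g\<in>F. h g x * g x)) (nhds 0)"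
    using assms(2) unfolding gen_ideal_def by blast
  show ?thesis unfolding gen_ideal_def
  proof (intro CollectI conjI exI[of _ F] exI[of _ "\<lambda>g x. a x * h g x"])
    show "germ_holo (\<lambda>x. a x * f x)" using assms gen_ideal_holo germ_holo_mult by blast
    show "\<forall>g\<in>F. germ_holo (\<lambda>x. a x * h g x)" using F(3) assms(1) germ_holo_mult by blast
    show "eventually (\<lambda>x. a x * f x = (\<Sum>g\<in>F. a x * h g x * g x)) (nhds 0)"
      using F(4) by eventually_elim (simp add: sum_distrib_left mult.assoc)
  qed (use F in auto)
qed

lemma gen_ideal_add:
  assumes "f \<in> gen_ideal S" "g \<in> gen_ideal S"
  shows "(\<lambda>x. f x + g x) \<in> gen_ideal S"
proof -
  obtain F h where F: "finite F" "F \<subseteq> S" "\<forall>f\<in>F. germ_holo (h f)"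
    "eventually (\<lambda>x. f x = (\<Sum>k\<in>F. h k x * k x)) (nhds 0)"
    using assms(1) unfolding gen_ideal_def by blast
  obtain G k where G: "finite G" "G \<subseteq> S" "\<forall>f\<in>G. germ_holo (k f)"
    "eventually (\<lambda>x. g x = (\<Sum>j\<in>G. k j x * j x)) (nhds 0)"
    using assms(2) unfolding gen_ideal_def by blast
  define H where "H = (\<lambda>j x. (if j \<in> F then h j x else 0) + (if j \<in> G then k j x else 0))"
  have sF: "(\<Sum>j\<in>F \<union> G. (if j \<in> F then h j x else 0) * j x) = (\<Sum>j\<in>F. h j x * j x)" for x
  proof -
    have "(\<Sum>j\<in>F \<union> G. (if j \<in> F then h j x else 0) * j x) = (\<Sum>j\<in>F \<union> G. if j \<in> F then h j x * j x else 0)"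
      by (intro sum.cong) auto
    also have "\<dots> = (\<Sum>j\<in>(F \<union> G) \<inter> F. h j x * j x)" using F(1) G(1) by (subst sum.inter_restrict) auto
    also have "(F \<union> G) \<inter> F = F" by auto
    finally show ?thesis .
  qed
  have sG: "(\<Sum>j\<in>F \<union> G. (if j \<in> G then k j x else 0) * j x) = (\<Sum>j\<in>G. k j x * j x)" for x
  proof -
    have "(\<Sum>j\<in>F \<union> G. (if j \<in> G then k j x else 0) * j x) = (\<Sum>j\<in>F \<union> G. if j \<in> G then k j x * j x else 0)"
      by (intro sum.cong) auto
    also have "\<dots> = (\<Sum>j\<in>(F \<union> G) \<inter> G. k j x * j x)" using F(1) G(1) by (subst sum.inter_restrict) auto
    also have "(F \<union> G) \<inter> G = G" by auto
    finally show ?thesis .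
  qed
  show ?thesis unfolding gen_ideal_def
  proof (intro CollectI conjI exI[of _ "F \<union> G"] exI[of _ H])
    show "germ_holo (\<lambda>x. f x + g x)" using assms gen_ideal_holo germ_holo_add by blast
    show "\<forall>j\<in>F \<union> G. germ_holo (H j)"
    proof
      fix j assume "j \<in> F \<union> G"
      have a: "germ_holo (\<lambda>x. if j \<in> F then h j x else 0)" using F(3) by (cases "j \<in> F") auto
      have b: "germ_holo (\<lambda>x. if j \<in> G then k j x else 0)" using G(3) by (cases "j \<in> G") auto
      show "germ_holo (H j)" unfolding H_def using germ_holo_add[OF a b] by simp
    qed
    show "eventually (\<lambda>x. f x + g x = (\<Sum>j\<in>F \<union> G. H j x * j x)) (nhds 0)"
      using F(4) G(4)
    proof eventually_elim
      case (elim x)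
      have "(\<Sum>j\<in>F \<union> G. H j x * j x) = (\<Sum>j\<in>F \<union> G. (if j \<in> F then h j x else 0) * j x)
          + (\<Sum>j\<in>F \<union> G. (if j \<in> G then k j x else 0) * j x)"
        unfolding H_def by (simp add: distrib_right sum.distrib)
      then show ?case using elim sF sG by simp
    qed
  qed (use F G in auto)
qed

lemma gen_ideal_mono: "S \<subseteq> T \<Longrightarrow> f \<in> gen_ideal S \<Longrightarrow> f \<in> gen_ideal T"
  unfolding gen_ideal_def by blast

lemma ord0_pow: "hol0 f \<Longrightarrow> ord0 (\<lambda>t. f t ^ n) = of_nat n * ord0 f"
proof (induction n)
  case 0 then show ?case using ord0_const[of 1] by simp
next
  case (Suc n)
  have "ord0 (\<lambda>t. f t ^ Suc n) = ord0 (\<lambda>t. f t * f t ^ n)" by simp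
  also have "\<dots> = ord0 f + ord0 (\<lambda>t. f t ^ n)" using Suc.prems by (intro ord0_mult hol0_pow)
  also have "\<dots> = of_nat (Suc n) * ord0 f" using Suc by (simp add: algebra_simps)
  finally show ?case .
qed

lemma ord0_cmult_ge: "hol0 f \<Longrightarrow> ord0 f \<le> ord0 (\<lambda>t. c * f t)"
proof (cases "c = 0")
  case True
  then show ?thesis using ord0_zero[of "\<lambda>t. c * f t"] by simp
qed (simp add: ord0_cmult)

lemma not_ev_zero: "\<not> eventually (\<lambda>t::complex. t = 0) (nhds 0)"
proof
  assume "eventually (\<lambda>t::complex. t = 0) (nhds 0)"
  then obtain S where S: "open S" "(0::complex) \<in> S" "\<And>x. x \<in> S \<Longrightarrow> x = 0" unfolding eventually_nhds by blast
  then obtain e where e: "e > 0" "ball 0 e \<subseteq> S" using openE by blast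
  have "complex_of_real (e/2) \<in> ball 0 e" using e(1) by simp
  then have "complex_of_real (e/2) = 0" using S(3) e(2) by blast
  then show False using e(1) by simp
qed

lemma ord0_id: "ord0 (\<lambda>t. t) = 1"
  using ord0_factor[of "\<lambda>t. 1" 1] by (simp add: one_enat_def)




definition G1 :: "complex^3 \<Rightarrow> complex" where "G1 = (\<lambda>x. x$1 ^ 3 - x$3 * x$2)"
definition G2 :: "complex^3 \<Rightarrow> complex" where "G2 = (\<lambda>x. x$2 ^ 2)"
definition II :: "(complex^3 \<Rightarrow> complex) set" where "II = gen_ideal {G1, G2}"
definition JJ :: "complex^3 \<Rightarrow> (complex^3 \<Rightarrow> complex) set" where "JJ c = gen_ideal (II \<union> {linform c})"

lemma linform3: fixes c x :: "complex^3" shows "linform c x = c$1 * x$1 + c$2 * x$2 + c$3 * x$3"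
  by (simp add: linform_def sum_3)

lemma holo_G1: "germ_holo G1"
  unfolding G1_def by (intro germ_holoI cdiff_diff cdiff_pow cdiff_mult cdiff_nth)
lemma holo_G2: "germ_holo G2"
  unfolding G2_def by (intro germ_holoI cdiff_pow cdiff_nth)
lemma holo_lin: fixes c :: "complex^3" shows "germ_holo (linform c)"
proof -
  have "linform c = (\<lambda>x. c$1 * x$1 + c$2 * x$2 + c$3 * x$3)" by (rule ext) (simp add: linform3)
  then show ?thesis by (simp add: germ_holoI cdiff_add cdiff_mult)
qed

lemma G1_JJ: "G1 \<in> JJ c"
  unfolding JJ_def II_def
  by (rule gen_ideal_gen) (auto intro: gen_ideal_gen holo_G1)
lemma G2_JJ: "G2 \<in> JJ c"
  unfolding JJ_def II_def
  by (rule gen_ideal_gen) (auto intro: gen_ideal_gen holo_G2)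
lemma lin_JJ: "linform c \<in> JJ c"
  unfolding JJ_def by (rule gen_ideal_gen) (auto intro: holo_lin)

lemma E_JJ: "(\<lambda>x. c$3 * x$1 ^ 3 + c$1 * (x$1 * x$2)) \<in> JJ c"
proof -
  have h2: "germ_holo (\<lambda>x. x $ (2::3))" by (intro germ_holoI cdiff_nth)
  have a: "(\<lambda>x. c$3 * G1 x) \<in> JJ c" unfolding JJ_def by (rule gen_ideal_mult[OF _ G1_JJ[unfolded JJ_def]]) simp
  have b: "(\<lambda>x. x$2 * linform c x) \<in> JJ c" unfolding JJ_def by (rule gen_ideal_mult[OF h2 lin_JJ[unfolded JJ_def]])
  have d: "(\<lambda>x. (-c$2) * G2 x) \<in> JJ c" unfolding JJ_def by (rule gen_ideal_mult[OF _ G2_JJ[unfolded JJ_def]]) simp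
  have "(\<lambda>x. c$3 * G1 x + (x$2 * linform c x + (-c$2) * G2 x)) \<in> JJ c"
    using gen_ideal_add[OF a[unfolded JJ_def] gen_ideal_add[OF b[unfolded JJ_def] d[unfolded JJ_def]]] unfolding JJ_def by simp
  moreover have "(\<lambda>x. c$3 * G1 x + (x$2 * linform c x + (-c$2) * G2 x))
      = (\<lambda>x. c$3 * x$1 ^ 3 + c$1 * (x$1 * x$2))"
    by (rule ext) (simp add: G1_def G2_def linform3 algebra_simps power2_eq_square)
  ultimately show ?thesis by simp
qed

lemma curveI3:
  fixes p1 p2 p3 :: "complex \<Rightarrow> complex"
  assumes "p1 holomorphic_on UNIV" "p2 holomorphic_on UNIV" "p3 holomorphic_on UNIV"
    "p1 0 = 0" "p2 0 = 0" "p3 0 = 0" "(p1 = (\<lambda>t. t)) \<or> (p3 = (\<lambda>t. t))"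
  shows "(\<lambda>t. vector [p1 t, p2 t, p3 t] :: complex^3) \<in> curves"
    "\<And>i. (\<lambda>t. (vector [p1 t, p2 t, p3 t] :: complex^3) $ i) holomorphic_on UNIV"
    "(vector [p1 0, p2 0, p3 0] :: complex^3) = 0"
    "curve_ord (\<lambda>t. vector [p1 t, p2 t, p3 t] :: complex^3) = 1"
proof -
  let ?g = "(\<lambda>t. vector [p1 t, p2 t, p3 t] :: complex^3)"
  show hol: "(\<lambda>t. ?g t $ i) holomorphic_on UNIV" for i
    using exhaust_3[of i] assms(1-3) by (elim disjE) simp_all
  show z: "(vector [p1 0, p2 0, p3 0] :: complex^3) = 0"
    using assms(4-6) by (simp add: vec_eq_iff forall_3)
  have ne: "\<not> eventually (\<lambda>t. ?g t = 0) (nhds 0)"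
  proof
    assume "eventually (\<lambda>t. ?g t = 0) (nhds 0)"
    then have "eventually (\<lambda>t. p1 t = 0 \<and> p3 t = 0) (nhds 0)"
      by eventually_elim (simp add: vec_eq_iff forall_3)
    then have "eventually (\<lambda>t::complex. t = 0) (nhds 0)"
      using assms(7) by (elim disjE) (simp_all add: eventually_conj_iff)
    then show False using not_ev_zero by simp
  qed
  show c: "?g \<in> curves" unfolding curves_def
    using hol z ne by (intro CollectI conjI exI[of _ UNIV]) auto
  have "\<exists>i. ord0 (\<lambda>t. ?g t $ i) = 1"
  proof (cases "p1 = (\<lambda>t. t)")
    case True then show ?thesis using ord0_id by (intro exI[of _ 1]) simp
  next
    case False then have "p3 = (\<lambda>t. t)" using assms(7) by simp
    then show ?thesis using ord0_id by (intro exI[of _ 3]) simp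
  qed
  then obtain i where i: "ord0 (\<lambda>t. ?g t $ i) = 1" by blast
  have "curve_ord ?g \<le> ord0 (\<lambda>t. ?g t $ i)" unfolding curve_ord_def by (rule INF_lower) simp
  then have "curve_ord ?g \<le> 1" using i by simp
  moreover have "1 \<le> curve_ord ?g" unfolding curve_ord_def
    by (rule INF_greatest) (rule curve_comp_ord(2)[OF c])
  ultimately show "curve_ord ?g = 1" by simp
qed




lemma JJ_ord:
  fixes p1 p2 p3 :: "complex \<Rightarrow> complex" and c :: "complex^3"
  defines "\<gamma> \<equiv> (\<lambda>t. vector [p1 t, p2 t, p3 t] :: complex^3)"
  assumes "p1 holomorphic_on UNIV" "p2 holomorphic_on UNIV" "p3 holomorphic_on UNIV"
    "p1 0 = 0" "p2 0 = 0" "p3 0 = 0" "(p1 = (\<lambda>t. t)) \<or> (p3 = (\<lambda>t. t))"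
    and q1: "\<exists>Q. hol0 Q \<and> eventually (\<lambda>t. G1 (\<gamma> t) = t^n * Q t) (nhds 0)"
    and q2: "\<exists>Q. hol0 Q \<and> eventually (\<lambda>t. G2 (\<gamma> t) = t^n * Q t) (nhds 0)"
    and q3: "\<And>t. linform c (\<gamma> t) = 0"
  shows "\<And>g. g \<in> JJ c \<Longrightarrow> enat n \<le> ord0 (\<lambda>t. g (\<gamma> t))"
proof -
  fix g assume g: "g \<in> JJ c"
  note cv = curveI3[OF assms(2-8), folded \<gamma>_def]
  have z: "\<gamma> 0 = 0" using cv(3) unfolding \<gamma>_def by simp
  have hol: "(\<lambda>t. \<gamma> t $ i) holomorphic_on UNIV" for i using cv(2) unfolding \<gamma>_def .
  have II: "\<exists>Q. hol0 Q \<and> eventually (\<lambda>t. s (\<gamma> t) = t^n * Q t) (nhds 0)" if "s \<in> II" for s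
    using that unfolding II_def
    by (rule ideal_dvdt[OF open_UNIV UNIV_I hol z, rotated]) (use q1 q2 in auto)
  have "\<exists>Q. hol0 Q \<and> eventually (\<lambda>t. g (\<gamma> t) = t^n * Q t) (nhds 0)"
    using g unfolding JJ_def
  proof (rule ideal_dvdt[OF open_UNIV UNIV_I hol z, rotated])
    fix s assume "s \<in> II \<union> {linform c}"
    then show "\<exists>Q. hol0 Q \<and> eventually (\<lambda>t. s (\<gamma> t) = t^n * Q t) (nhds 0)"
    proof
      assume "s \<in> {linform c}"
      then show ?thesis using q3 by (intro exI[of _ "\<lambda>t. 0"]) auto
    qed (rule II)
  qed
  then obtain Q where "hol0 Q" "eventually (\<lambda>t. g (\<gamma> t) = t^n * Q t) (nhds 0)" by blast
  then show "enat n \<le> ord0 (\<lambda>t. g (\<gamma> t))" by (rule ord0_ge)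
qed




lemma lower_curve:
  fixes pa pb pc :: "complex \<Rightarrow> complex" and c :: "complex^3"
  assumes "pa holomorphic_on UNIV" "pb holomorphic_on UNIV" "pc holomorphic_on UNIV"
    "pa 0 = 0" "pb 0 = 0" "pc 0 = 0" "(pa = (\<lambda>t. t)) \<or> (pc = (\<lambda>t. t))"
    and q1: "\<exists>Q. hol0 Q \<and> eventually (\<lambda>t. G1 (vector [pa t, pb t, pc t]) = t^n * Q t) (nhds 0)"
    and q2: "\<exists>Q. hol0 Q \<and> eventually (\<lambda>t. G2 (vector [pa t, pb t, pc t]) = t^n * Q t) (nhds 0)"
    and q3: "\<And>t. linform c (vector [pa t, pb t, pc t]) = 0"
  shows "ereal (real n) \<le> T1 (JJ c)"
  using T1_lower[OF curveI3(1)[OF assms(1-7)] curveI3(4)[OF assms(1-7)] JJ_ord[OF assms]] by simp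

lemma lower3:
  fixes c :: "complex^3"
  assumes "c$3 \<noteq> 0"
  shows "3 \<le> T1 (JJ c)"
proof -
  have "ereal (real 3) \<le> T1 (JJ c)"
  proof (rule lower_curve[where pa="\<lambda>t. t" and pb="\<lambda>t. 0" and pc="\<lambda>t. -(c$1/c$3) * t"])
    show "\<exists>Q. hol0 Q \<and> eventually (\<lambda>t. G1 (vector [t, 0, -(c$1/c$3) * t]) = t^3 * Q t) (nhds 0)"
      by (intro exI[of _ "\<lambda>t. 1"] conjI always_eventually allI) (auto simp: G1_def)
    show "\<exists>Q. hol0 Q \<and> eventually (\<lambda>t. G2 (vector [t, 0, -(c$1/c$3) * t]) = t^3 * Q t) (nhds 0)"
      by (intro exI[of _ "\<lambda>t. 0"] conjI always_eventually allI) (auto simp: G2_def)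
    show "linform c (vector [t, 0, -(c$1/c$3) * t]) = 0" for t
      using assms by (simp add: linform3 field_simps)
  qed (auto intro!: holomorphic_intros)
  then show ?thesis by simp
qed

lemma lower4:
  fixes c :: "complex^3"
  assumes "c$3 \<noteq> 0" "c$1 \<noteq> 0"
  shows "4 \<le> T1 (JJ c)"
proof -
  define s where "s = c$3 / c$1"
  have cs: "c$1 * s = c$3" using assms(2) unfolding s_def by simp
  have "ereal (real 4) \<le> T1 (JJ c)"
  proof (rule lower_curve[where pa="\<lambda>t. t" and pb="\<lambda>t. -s * t^2" and pc="\<lambda>t. -(c$1/c$3) * t + (c$2 * s / c$3) * t^2"])
    show "\<exists>Q. hol0 Q \<and> eventually (\<lambda>t. G1 (vector [t, -s * t^2, -(c$1/c$3) * t + (c$2 * s / c$3) * t^2]) = t^4 * Q t) (nhds 0)"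
    proof (intro exI[of _ "\<lambda>t. c$2 * s^2 / c$3"] conjI always_eventually allI)
      fix t :: complex
      have "G1 (vector [t, -s * t^2, -(c$1/c$3) * t + (c$2 * s / c$3) * t^2]) =
          t^3 - (c$1 * s / c$3) * t^3 + (c$2 * s^2 / c$3) * t^4"
        by (simp add: G1_def algebra_simps power2_eq_square power3_eq_cube power4_eq_xxxx)
      also have "c$1 * s / c$3 = 1" using cs assms(1) by simp
      finally show "G1 (vector [t, -s * t^2, -(c$1/c$3) * t + (c$2 * s / c$3) * t^2]) = t^4 * (c$2 * s^2 / c$3)"
        by simp
    qed simp
    show "\<exists>Q. hol0 Q \<and> eventually (\<lambda>t. G2 (vector [t, -s * t^2, -(c$1/c$3) * t + (c$2 * s / c$3) * t^2]) = t^4 * Q t) (nhds 0)"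
      by (intro exI[of _ "\<lambda>t. s^2"] conjI always_eventually allI)
         (auto simp: G2_def power2_eq_square power4_eq_xxxx)
    show "linform c (vector [t, -s * t^2, -(c$1/c$3) * t + (c$2 * s / c$3) * t^2]) = 0" for t
      using assms by (simp add: linform3 field_simps)
  qed (auto intro!: holomorphic_intros)
  then show ?thesis by simp
qed

lemma lower_inf:
  fixes c :: "complex^3"
  assumes "c$3 = 0"
  shows "T1 (JJ c) = \<infinity>"
proof -
  have "ereal (real n) \<le> T1 (JJ c)" for n
  proof (rule lower_curve[where pa="\<lambda>t. 0" and pb="\<lambda>t. 0" and pc="\<lambda>t. t"])
    show "\<exists>Q. hol0 Q \<and> eventually (\<lambda>t. G1 (vector [0, 0, t]) = t^n * Q t) (nhds 0)"
      by (intro exI[of _ "\<lambda>t. 0"] conjI always_eventually allI) (auto simp: G1_def)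
    show "\<exists>Q. hol0 Q \<and> eventually (\<lambda>t. G2 (vector [0, 0, t]) = t^n * Q t) (nhds 0)"
      by (intro exI[of _ "\<lambda>t. 0"] conjI always_eventually allI) (auto simp: G2_def)
    show "linform c (vector [0, 0, t]) = 0" for t
      using assms by (simp add: linform3)
  qed (auto intro!: holomorphic_intros)
  then show ?thesis
  proof (cases "T1 (JJ c)")
    case (real r)
    obtain n :: nat where "r < real n" using reals_Archimedean2 by blast
    then show ?thesis using \<open>\<And>n. ereal (real n) \<le> T1 (JJ c)\<close>[of n] real by simp
  next
    case MInf then show ?thesis using \<open>\<And>n. ereal (real n) \<le> T1 (JJ c)\<close>[of 0] by simp
  qed simp
qed




lemma curve_setup:
  fixes z :: "complex \<Rightarrow> complex^3"
  assumes z: "z \<in> curves"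
  obtains m where "curve_ord z = enat m" "1 \<le> m"
    "min (ord0 (\<lambda>t. z t $ 1)) (min (ord0 (\<lambda>t. z t $ 2)) (ord0 (\<lambda>t. z t $ 3))) = enat m"
    "\<And>i. hol0 (\<lambda>t. z t $ i)"
proof -
  obtain m where m: "curve_ord z = enat m" "1 \<le> m" using curve_ord3[OF z] by blast
  have cz: "curve_ord z = min (ord0 (\<lambda>t. z t $ 1)) (min (ord0 (\<lambda>t. z t $ 2)) (ord0 (\<lambda>t. z t $ 3)))"
    unfolding curve_ord_def UNIV_3 by (simp add: inf_min)
  show ?thesis
    by (rule that[OF m(1) m(2) _ curve_comp_ord(1)[OF z]]) (use m cz in simp)
qed

lemma ord_G1:
  assumes "hol0 u1" "hol0 u2" "hol0 u3" "ord0 u1 = enat m" "enat (3*m) < ord0 u3 + ord0 u2"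
  shows "ord0 (\<lambda>t. u1 t ^ 3 - u3 t * u2 t) = enat (3*m)"
proof -
  have e: "(\<lambda>t. u1 t ^ 3 - u3 t * u2 t) = (\<lambda>t. u1 t ^ 3 + (-1) * (u3 t * u2 t))" by simp
  have A: "ord0 (\<lambda>t. u1 t ^ 3) = enat (3*m)" using ord0_pow[OF assms(1), of 3] assms(4)
    by (simp add: of_nat_eq_enat)
  have B: "ord0 (\<lambda>t. (-1) * (u3 t * u2 t)) = ord0 u3 + ord0 u2"
  proof -
    have "ord0 (\<lambda>t. (-1) * (u3 t * u2 t)) = ord0 (\<lambda>t. u3 t * u2 t)"
      by (rule ord0_cmult[OF hol0_mult[OF assms(3,2)]]) simp
    also have "\<dots> = ord0 u3 + ord0 u2" by (rule ord0_mult[OF assms(3,2)])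
    finally show ?thesis .
  qed
  have h1: "hol0 (\<lambda>t. u1 t ^ 3)" by (rule hol0_pow[OF assms(1)])
  have h2: "hol0 (\<lambda>t. (-1) * (u3 t * u2 t))" by (rule hol0_mult[OF hol0_const hol0_mult[OF assms(3,2)]])
  have lt: "ord0 (\<lambda>t. u1 t ^ 3) < ord0 (\<lambda>t. (-1) * (u3 t * u2 t))" unfolding A B by (rule assms(5))
  have "ord0 (\<lambda>t. u1 t ^ 3 - u3 t * u2 t) = ord0 (\<lambda>t. u1 t ^ 3 + (-1) * (u3 t * u2 t))"
    by (simp only: e)
  also have "\<dots> = ord0 (\<lambda>t. u1 t ^ 3)"
    by (rule ord0_add_less[OF h1 h2 lt])
  also have "\<dots> = enat (3*m)" by (rule A)
  finally show ?thesis .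
qed

lemma ord_lin:
  assumes "hol0 u1" "hol0 u2" "hol0 u3" "c3 \<noteq> 0" "ord0 u3 = enat m" "enat m < ord0 u1" "enat m < ord0 u2"
  shows "ord0 (\<lambda>t. c1 * u1 t + c2 * u2 t + c3 * u3 t) = enat m"
proof -
  have e: "(\<lambda>t. c1 * u1 t + c2 * u2 t + c3 * u3 t) = (\<lambda>t. c3 * u3 t + (c1 * u1 t + c2 * u2 t))"
    by (simp add: algebra_simps)
  have A: "ord0 (\<lambda>t. c3 * u3 t) = enat m" using ord0_cmult[OF assms(3,4)] assms(5) by simp
  have mn: "min (ord0 (\<lambda>t. c1 * u1 t)) (ord0 (\<lambda>t. c2 * u2 t)) \<le> ord0 (\<lambda>t. c1 * u1 t + c2 * u2 t)"
    by (rule ord0_add_ge[OF hol0_mult[OF hol0_const assms(1)] hol0_mult[OF hol0_const assms(2)]])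
  have l1: "enat m < ord0 (\<lambda>t. c1 * u1 t)"
    by (rule order_less_le_trans[OF assms(6) ord0_cmult_ge[OF assms(1)]])
  have l2: "enat m < ord0 (\<lambda>t. c2 * u2 t)"
    by (rule order_less_le_trans[OF assms(7) ord0_cmult_ge[OF assms(2)]])
  have "enat m < min (ord0 (\<lambda>t. c1 * u1 t)) (ord0 (\<lambda>t. c2 * u2 t))" using l1 l2 by simp
  then have B: "enat m < ord0 (\<lambda>t. c1 * u1 t + c2 * u2 t)" using mn by (rule order_less_le_trans)
  have h1: "hol0 (\<lambda>t. c3 * u3 t)" by (rule hol0_mult[OF hol0_const assms(3)])
  have h2: "hol0 (\<lambda>t. c1 * u1 t + c2 * u2 t)"
    by (rule hol0_add[OF hol0_mult[OF hol0_const assms(1)] hol0_mult[OF hol0_const assms(2)]])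
  have "ord0 (\<lambda>t. c1 * u1 t + c2 * u2 t + c3 * u3 t) = ord0 (\<lambda>t. c3 * u3 t + (c1 * u1 t + c2 * u2 t))"
    by (simp only: e)
  also have "\<dots> = ord0 (\<lambda>t. c3 * u3 t)"
    by (rule ord0_add_less[OF h1 h2]) (simp only: A B)
  also have "\<dots> = enat m" by (rule A)
  finally show ?thesis .
qed




lemma upper_common:
  fixes c :: "complex^3" and z :: "complex \<Rightarrow> complex^3"
  assumes "c$3 \<noteq> 0" "hol0 (\<lambda>t. z t $ 1)" "hol0 (\<lambda>t. z t $ 2)" "hol0 (\<lambda>t. z t $ 3)"
  shows "ord0 (\<lambda>t. G2 (z t)) = 2 * ord0 (\<lambda>t. z t $ 2)"
    "ord0 (\<lambda>t. z t $ 1) = enat m \<Longrightarrow> enat (3*m) < ord0 (\<lambda>t. z t $ 3) + ord0 (\<lambda>t. z t $ 2)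
       \<Longrightarrow> ord0 (\<lambda>t. G1 (z t)) = enat (3*m)"
    "ord0 (\<lambda>t. z t $ 3) = enat m \<Longrightarrow> enat m < ord0 (\<lambda>t. z t $ 1) \<Longrightarrow> enat m < ord0 (\<lambda>t. z t $ 2)
       \<Longrightarrow> ord0 (\<lambda>t. linform c (z t)) = enat m"
proof -
  have "ord0 (\<lambda>t. G2 (z t)) = ord0 (\<lambda>t. z t $ 2 ^ 2)" by (simp add: G2_def)
  also have "\<dots> = of_nat 2 * ord0 (\<lambda>t. z t $ 2)" by (rule ord0_pow[OF assms(3)])
  finally show "ord0 (\<lambda>t. G2 (z t)) = 2 * ord0 (\<lambda>t. z t $ 2)" by simp
  show "ord0 (\<lambda>t. G1 (z t)) = enat (3*m)"
    if "ord0 (\<lambda>t. z t $ 1) = enat m" "enat (3*m) < ord0 (\<lambda>t. z t $ 3) + ord0 (\<lambda>t. z t $ 2)"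
  proof -
    have "ord0 (\<lambda>t. G1 (z t)) = ord0 (\<lambda>t. z t $ 1 ^ 3 - z t $ 3 * z t $ 2)" by (simp add: G1_def)
    also have "\<dots> = enat (3*m)" by (rule ord_G1[OF assms(2,3,4) that])
    finally show ?thesis .
  qed
  show "ord0 (\<lambda>t. linform c (z t)) = enat m"
    if "ord0 (\<lambda>t. z t $ 3) = enat m" "enat m < ord0 (\<lambda>t. z t $ 1)" "enat m < ord0 (\<lambda>t. z t $ 2)"
  proof -
    have "ord0 (\<lambda>t. linform c (z t)) = ord0 (\<lambda>t. c$1 * z t $ 1 + c$2 * z t $ 2 + c$3 * z t $ 3)"
      by (simp add: linform3)
    also have "\<dots> = enat m" by (rule ord_lin[OF assms(2,3,4,1) that])
    finally show ?thesis .
  qed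
qed

lemma upper4:
  fixes c :: "complex^3"
  assumes c3: "c$3 \<noteq> 0"
  shows "T1 (JJ c) \<le> 4"
proof -
  have "T1 (JJ c) \<le> ereal (real 4)"
  proof (rule T1_upper)
    fix z :: "complex \<Rightarrow> complex^3" assume z: "z \<in> curves"
    obtain m where m: "curve_ord z = enat m" "1 \<le> m"
      and mn: "min (ord0 (\<lambda>t. z t $ 1)) (min (ord0 (\<lambda>t. z t $ 2)) (ord0 (\<lambda>t. z t $ 3))) = enat m"
      and hu: "\<And>i. hol0 (\<lambda>t. z t $ i)"
      using curve_setup[OF z] by metis
    note U = upper_common[OF c3 hu hu hu]
    define x1 where "x1 = ord0 (\<lambda>t. z t $ 1)"
    define x2 where "x2 = ord0 (\<lambda>t. z t $ 2)"
    define x3 where "x3 = ord0 (\<lambda>t. z t $ 3)"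
    have mn': "min x1 (min x2 x3) = enat m" using mn unfolding x1_def x2_def x3_def .
    have goal: "enat 4 * curve_ord z = enat (4*m)" using m(1) by simp
    show "\<exists>g\<in>JJ c. ord0 (\<lambda>t. g (z t)) \<le> enat 4 * curve_ord z"
    proof (cases "2 * x2 \<le> enat (4*m)")
      case True
      then show ?thesis using G2_JJ U(1) goal unfolding x2_def by (intro bexI[of _ G2]) auto
    next
      case False
      then have x2: "enat (2*m) < x2" by (cases x2) (auto simp: numeral_eq_enat)
      show ?thesis
      proof (cases "x1 = enat m")
        case True
        have "enat m \<le> x3" using mn' by (metis min.bounded_iff order_refl)
        then have "enat (3*m) < x3 + x2" using x2 by (cases x3; cases x2) auto
        then have "ord0 (\<lambda>t. G1 (z t)) = enat (3*m)"
          using U(2)[of m] True unfolding x1_def x2_def x3_def by simp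
        then show ?thesis using G1_JJ using goal by (intro bexI[of _ G1]) auto
      next
        case False
        have x1: "enat m < x1" using mn' False by (metis min.bounded_iff order.not_eq_order_implies_strict order_refl)
        have x2': "enat m < x2" using x2 by (cases x2) (auto simp: numeral_eq_enat)
        have x3: "x3 = enat m" using mn' x1 x2' by (auto simp: min_def split: if_splits)
        have "ord0 (\<lambda>t. linform c (z t)) = enat m"
          using U(3)[of m] x1 x2' x3 unfolding x1_def x2_def x3_def by simp
        then show ?thesis using lin_JJ using goal m(2) by (intro bexI[of _ "linform c"]) auto
      qed
    qed
  qed
  then show ?thesis by simp
qed

lemma upper3:
  fixes c :: "complex^3"
  assumes c3: "c$3 \<noteq> 0" and c1: "c$1 = 0"
  shows "T1 (JJ c) \<le> 3"
proof -
  have "T1 (JJ c) \<le> ereal (real 3)"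
  proof (rule T1_upper)
    fix z :: "complex \<Rightarrow> complex^3" assume z: "z \<in> curves"
    obtain m where m: "curve_ord z = enat m" "1 \<le> m"
      and mn: "min (ord0 (\<lambda>t. z t $ 1)) (min (ord0 (\<lambda>t. z t $ 2)) (ord0 (\<lambda>t. z t $ 3))) = enat m"
      and hu: "\<And>i. hol0 (\<lambda>t. z t $ i)"
      using curve_setup[OF z] by metis
    note U = upper_common[OF c3 hu hu hu]
    define x1 where "x1 = ord0 (\<lambda>t. z t $ 1)"
    define x2 where "x2 = ord0 (\<lambda>t. z t $ 2)"
    define x3 where "x3 = ord0 (\<lambda>t. z t $ 3)"
    have mn': "min x1 (min x2 x3) = enat m" using mn unfolding x1_def x2_def x3_def .
    have goal: "enat 3 * curve_ord z = enat (3*m)" using m(1) by simp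
    let ?E = "(\<lambda>x::complex^3. c$3 * x$1 ^ 3 + c$1 * (x$1 * x$2))"
    have E: "ord0 (\<lambda>t. ?E (z t)) = 3 * x1"
    proof -
      have "ord0 (\<lambda>t. ?E (z t)) = ord0 (\<lambda>t. c$3 * z t $ 1 ^ 3)" using c1 by simp
      also have "\<dots> = ord0 (\<lambda>t. z t $ 1 ^ 3)" by (rule ord0_cmult[OF hol0_pow[OF hu] c3])
      also have "\<dots> = of_nat 3 * x1" unfolding x1_def by (rule ord0_pow[OF hu])
      finally show ?thesis by simp
    qed
    show "\<exists>g\<in>JJ c. ord0 (\<lambda>t. g (z t)) \<le> enat 3 * curve_ord z"
    proof (cases "2 * x2 \<le> enat (3*m)")
      case True
      then show ?thesis using G2_JJ U(1) goal unfolding x2_def by (intro bexI[of _ G2]) auto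
    next
      case False
      then have x2': "enat m < x2" using m(2) by (cases x2) (auto simp: numeral_eq_enat)
      show ?thesis
      proof (cases "x1 = enat m")
        case True
        then show ?thesis using E_JJ E goal by (intro bexI[of _ ?E]) (auto simp: numeral_eq_enat)
      next
        case False
        have x1: "enat m < x1" using mn' False by (metis min.bounded_iff order.not_eq_order_implies_strict order_refl)
        have x3: "x3 = enat m" using mn' x1 x2' by (auto simp: min_def split: if_splits)
        have "ord0 (\<lambda>t. linform c (z t)) = enat m"
          using U(3)[of m] x1 x2' x3 unfolding x1_def x2_def x3_def by simp
        then show ?thesis using lin_JJ using goal m(2) by (intro bexI[of _ "linform c"]) auto
      qed
    qed
  qed
  then show ?thesis by simp
qed




lemma T1_JJ_4: fixes c :: "complex^3" shows "c$3 \<noteq> 0 \<Longrightarrow> c$1 \<noteq> 0 \<Longrightarrow> T1 (JJ c) = 4"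
  by (rule order_antisym[OF upper4 lower4])
lemma T1_JJ_3: fixes c :: "complex^3" shows "c$3 \<noteq> 0 \<Longrightarrow> c$1 = 0 \<Longrightarrow> T1 (JJ c) = 3"
  by (rule order_antisym[OF upper3 lower3])
lemma T1_JJ_ge3: fixes c :: "complex^3" shows "3 \<le> T1 (JJ c)"
  using lower3 lower_inf by (cases "c$3 = 0") auto

lemma perturb:
  fixes p :: "complex^3 \<Rightarrow> complex"
  assumes hp: "hom_poly p" and p0: "p c0 \<noteq> 0"
  shows "\<exists>c. p c \<noteq> 0 \<and> c$1 \<noteq> 0 \<and> c$3 \<noteq> 0"
proof -
  obtain d F cc where F: "p = (\<lambda>x. \<Sum>\<alpha>\<in>F. cc \<alpha> * (\<Prod>i\<in>UNIV. x $ i ^ \<alpha> i))"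
    using hp unfolding hom_poly_def by blast
  define e :: "3 \<Rightarrow> complex" where "e i = (if i = 2 then 0 else 1)" for i
  define L where "L w = (\<chi> i. c0$i + w * e i)" for w
  define f where "f w = (\<Sum>\<alpha>\<in>F. cc \<alpha> * (\<Prod>i\<in>UNIV. (c0$i + w * e i) ^ \<alpha> i))" for w
  have fL: "f w = p (L w)" for w unfolding f_def F L_def by simp
  have "isCont f 0" unfolding f_def by (intro continuous_intros)
  then have "(f \<longlongrightarrow> f 0) (at 0)" by (simp add: isCont_def)
  moreover have "f 0 = p c0" unfolding fL L_def by (simp add: vec_lambda_eta)
  ultimately have ev1: "eventually (\<lambda>w. f w \<noteq> 0) (at 0)" using p0 by (intro tendsto_imp_eventually_ne) auto
  have ev2: "eventually (\<lambda>w. w \<noteq> - c0$1) (at (0::complex))" by (rule eventually_neq_at_within)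
  have ev3: "eventually (\<lambda>w. w \<noteq> - c0$3) (at (0::complex))" by (rule eventually_neq_at_within)
  have "eventually (\<lambda>w. f w \<noteq> 0 \<and> w \<noteq> - c0$1 \<and> w \<noteq> - c0$3) (at (0::complex))"
    using ev1 ev2 ev3 by eventually_elim auto
  then obtain w where l: "f w \<noteq> 0" "w \<noteq> - c0$1" "w \<noteq> - c0$3"
    using eventually_happens'[OF at_neq_bot] by blast
  have "L w $ 1 = c0$1 + w" "L w $ 3 = c0$3 + w" unfolding L_def e_def by simp_all
  then show ?thesis using l fL
    by (intro exI[of _ "L w"]) (auto simp: add_eq_0_iff)
qed

lemma prod_3: "prod f (UNIV::3 set) = f 1 * f 2 * f 3"
  unfolding UNIV_3 by (simp add: ac_simps)

lemma hom_poly_13: "hom_poly (\<lambda>c::complex^3. c$1 * c$3)"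
proof -
  define a where "a = (\<lambda>i::3. if i = 2 then 0 else (1::nat))"
  have a: "a 1 = 1" "a 2 = 0" "a 3 = 1" unfolding a_def by simp_all
  have e: "(\<lambda>c::complex^3. c$1 * c$3) = (\<lambda>x. \<Sum>\<alpha>\<in>{a}. (\<lambda>_. 1) \<alpha> * (\<Prod>i\<in>UNIV. x $ i ^ \<alpha> i))"
    by (rule ext) (simp add: prod_3 a)
  have s: "\<forall>\<alpha>\<in>{a}. (\<Sum>i\<in>UNIV. \<alpha> i) = 2" by (simp add: sum_3 a)
  show ?thesis unfolding hom_poly_def
    by (rule exI[of _ 2], rule exI[of _ "{a}"], rule exI[of _ "\<lambda>_. 1"]) (use e s in simp)
qed




theorem mainTheorem2:
  fixes I :: "(complex^3 \<Rightarrow> complex) set"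
  assumes "I = gen_ideal {(\<lambda>x. x$1 ^ 3 - x$3 * x$2), (\<lambda>x. x$2 ^ 2)}"
  shows "Tq 2 I = 3 \<and> beta2 I = 4 \<and>
    (\<forall>a b::complex. T1 (gen_ideal (I \<union> {\<lambda>x. a * x$1 + b * x$2 + x$3}))
        = (if a \<noteq> 0 then 4 else 3)) \<and>
    (\<forall>a b::complex. T1 (gen_ideal (I \<union> {\<lambda>x. a * x$1 + b * x$2})) = \<infinity>)"
proof -
  have I: "I = II" unfolding assms II_def G1_def G2_def by simp
  have JJe: "gen_ideal (I \<union> {linform c}) = JJ c" for c unfolding JJ_def I ..
  have lin1: "(\<lambda>x::complex^3. a * x$1 + b * x$2 + x$3) = linform (vector [a,b,1])" for a b
    by (rule ext) (simp add: linform3)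
  have lin0: "(\<lambda>x::complex^3. a * x$1 + b * x$2) = linform (vector [a,b,0])" for a b
    by (rule ext) (simp add: linform3)
  have C3: "T1 (gen_ideal (I \<union> {\<lambda>x. a * x$1 + b * x$2 + x$3})) = (if a \<noteq> 0 then 4 else 3)" for a b
  proof -
    have e0: "gen_ideal (I \<union> {\<lambda>x. a * x$1 + b * x$2 + x$3}) = JJ (vector [a,b,1])"
      by (subst lin1) (rule JJe)
    have e: "T1 (gen_ideal (I \<union> {\<lambda>x. a * x$1 + b * x$2 + x$3})) = T1 (JJ (vector [a,b,1]))"
      by (subst e0) (rule refl)
    show ?thesis
    proof (cases "a = 0")
      case True
      have r: "T1 (JJ (vector [a,b,1])) = 3" by (rule T1_JJ_3) (use True in simp_all)
      have i: "(if a \<noteq> 0 then 4 else 3) = (3::ereal)" using True by simp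
      show ?thesis unfolding e r i by (rule refl)
    next
      case False
      have r: "T1 (JJ (vector [a,b,1])) = 4" by (rule T1_JJ_4) (use False in simp_all)
      have i: "(if a \<noteq> 0 then 4 else 3) = (4::ereal)" using False by simp
      show ?thesis unfolding e r i by (rule refl)
    qed
  qed
  have C4: "T1 (gen_ideal (I \<union> {\<lambda>x. a * x$1 + b * x$2})) = \<infinity>" for a b
  proof -
    have e: "gen_ideal (I \<union> {\<lambda>x. a * x$1 + b * x$2}) = JJ (vector [a,b,0])"
      by (subst lin0) (rule JJe)
    have v: "(vector [a,b,0] :: complex^3) $ 3 = 0" by (rule vector_3(3))
    show ?thesis by (subst e) (rule lower_inf[OF v])
  qed
  have Tq: "Tq 2 I = 3"
    unfolding Tq_def
  proof (rule antisym)
    have "T1 (gen_ideal (I \<union> linform ` set [vector [0,0,1]])) = 3"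
      using T1_JJ_3[of "vector [0,0,1]"] JJe[of "vector [0,0,1]"] by simp
    then show "(INF ws\<in>{ws :: (complex^3) list. length ws = 2 - 1}. T1 (gen_ideal (I \<union> linform ` set ws))) \<le> 3"
      by (intro INF_lower2[of "[vector [0,0,1]]"]) simp_all
    show "3 \<le> (INF ws\<in>{ws :: (complex^3) list. length ws = 2 - 1}. T1 (gen_ideal (I \<union> linform ` set ws)))"
    proof (rule INF_greatest)
      fix ws :: "(complex^3) list" assume "ws \<in> {ws. length ws = 2 - 1}"
      then obtain c where "ws = [c]" by (cases ws) auto
      then show "3 \<le> T1 (gen_ideal (I \<union> linform ` set ws))" using T1_JJ_ge3[of c] JJe[of c] by simp
    qed
  qed
  have T4: "T1 (gen_ideal (I \<union> {linform c})) = 4" if "c$1 \<noteq> 0" "c$3 \<noteq> 0" for c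
    by (subst JJe) (rule T1_JJ_4[OF that(2,1)])
  define W0 where "W0 = {c::complex^3. c \<noteq> 0 \<and> (\<exists>p\<in>{\<lambda>c::complex^3. c$1 * c$3}. p c \<noteq> 0)}"
  have z: "zariski_open_hyp W0" unfolding zariski_open_hyp_def W0_def
    by (rule exI[of _ "{\<lambda>c::complex^3. c$1 * c$3}"], rule conjI[OF _ refl]) (use hom_poly_13 in blast)
  have v1: "(vector [1,0,1]::complex^3) $ 1 = 1" "(vector [1,0,1]::complex^3) $ 3 = 1"
    by (rule vector_3(1), rule vector_3(3))
  have vne: "(vector [1,0,1]::complex^3) \<noteq> 0"
  proof
    assume h: "(vector [1,0,1]::complex^3) = 0"
    have "(vector [1,0,1]::complex^3) $ 1 = 0" unfolding h by (rule zero_index)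
    then show False unfolding v1 by simp
  qed
  have ne: "W0 \<noteq> {}"
  proof -
    have "vector [1,0,1] \<in> W0" unfolding W0_def using vne v1 by simp
    then show ?thesis by blast
  qed
  have vals: "\<forall>c\<in>W0. T1 (gen_ideal (I \<union> {linform c})) = 4"
  proof
    fix c assume "c \<in> W0"
    then have "c$1 * c$3 \<noteq> 0" unfolding W0_def by blast
    then show "T1 (gen_ideal (I \<union> {linform c})) = 4" by (intro T4) simp_all
  qed
  have B: "beta2 I = 4"
    unfolding beta2_def
  proof (rule the_equality)
    show "\<exists>W. zariski_open_hyp W \<and> W \<noteq> {} \<and> (\<forall>c\<in>W. T1 (gen_ideal (I \<union> {linform c})) = 4)"
      using z ne vals by blast
    fix \<beta> assume "\<exists>W. zariski_open_hyp W \<and> W \<noteq> {} \<and> (\<forall>c\<in>W. T1 (gen_ideal (I \<union> {linform c})) = \<beta>)"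
    then obtain W where W: "zariski_open_hyp W" "W \<noteq> {}" "\<forall>c\<in>W. T1 (gen_ideal (I \<union> {linform c})) = \<beta>"
      by blast
    obtain P where P: "\<forall>p\<in>P. hom_poly p" "W = {c. c \<noteq> 0 \<and> (\<exists>p\<in>P. p c \<noteq> 0)}"
      using W(1) unfolding zariski_open_hyp_def by blast
    obtain c0 where "c0 \<in> W" using W(2) by blast
    then obtain p where p: "p \<in> P" "p c0 \<noteq> 0" using P(2) by blast
    have hp: "hom_poly p" using P(1) p(1) by blast
    obtain c where c: "p c \<noteq> 0" "c$1 \<noteq> 0" "c$3 \<noteq> 0" using perturb[OF hp p(2)] by blast
    have "c \<noteq> 0"
    proof
      assume "c = 0"
      then have "c$1 = 0" by simp
      then show False using c(2) by simp
    qed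
    then have "c \<in> W" using P(2) p(1) c(1) by blast
    then have "T1 (gen_ideal (I \<union> {linform c})) = \<beta>" using W(3) by blast
    then show "\<beta> = 4" using T4[OF c(2,3)] by simp
  qed
  show ?thesis using Tq B C3 C4 by simp
qed


end
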